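(* Let $3\le k\le n/2$ be integers. There exists a pair $(\lambda,i)$ with $\lambda\in\mathcal{P}_{k,n}$ and $i$ an integer with $1\le i\le n-1$ such that $|\lambda|\ge k(n-k)-i$ and $\lambda$ is an $(n-i)$-core partition if and only if $(k,n)\in\{(3,6),(4,8),(3,9)\}$.
   Context: $\mathcal{P}_{k,n}=\{\lambda=(\lambda_1,\dots,\lambda_k)\in\mathbb{Z}^k: n-k\ge\lambda_1\ge\dots\ge\lambda_k\ge0\}$ and $|\lambda|=\sum_i\lambda_i$. The hook length of a cell in the Young diagram of $\lambda$ is the number of cells directly to its right or directly below it, plus one (the cell itself). For a positive integer $j$, $\lambda$ is a $j$-core partition if no cell of $\lambda$ has hook length $j$. *)

theory Defs
  imports Main
begin

definition Pkn :: "nat \<Rightarrow> nat \<Rightarrow> nat list set" where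
  "Pkn k n = {lam. length lam = k \<and> (\<forall>r<k. lam ! r \<le> n - k)
                 \<and> (\<forall>r s. r \<le> s \<and> s < k \<longrightarrow> lam ! s \<le> lam ! r)}"

definition size_part :: "nat list \<Rightarrow> nat" where
  "size_part lam = sum_list lam"

definition cells :: "nat list \<Rightarrow> (nat \<times> nat) set" where
  "cells lam = {(r, c). r < length lam \<and> c < lam ! r}"

definition hook_length :: "nat list \<Rightarrow> nat \<times> nat \<Rightarrow> nat" where
  "hook_length lam rc = (case rc of (r, c) \<Rightarrow>
      card {c'. (r, c') \<in> cells lam \<and> c < c'}
    + card {r'. (r', c) \<in> cells lam \<and> r < r'} + 1)"

definition is_core :: "nat \<Rightarrow> nat list \<Rightarrow> bool" where
  "is_core j lam \<longleftrightarrow> (\<forall>x \<in> cells lam. hook_length lam x \<noteq> j)"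

end

theory Submission
  imports Defs
begin

lemma hook_formula:
  assumes "r < length lam" "c < lam ! r"
  shows "hook_length lam (r,c) = (lam!r - Suc c) + length (filter (\<lambda>r'. c < lam!r') [Suc r..<length lam]) + 1"
proof -
  have 1: "{c'. (r, c') \<in> cells lam \<and> c < c'} = {Suc c..<lam!r}"
    using assms by (auto simp: cells_def)
  have 2: "{r'. (r', c) \<in> cells lam \<and> r < r'} = set (filter (\<lambda>r'. c < lam!r') [Suc r..<length lam])"
    by (auto simp: cells_def)
  have 3: "card (set (filter (\<lambda>r'. c < lam!r') [Suc r..<length lam])) = length (filter (\<lambda>r'. c < lam!r') [Suc r..<length lam])"
    by (rule distinct_card) simp
  show ?thesis unfolding hook_length_def using 1 2 3 by simp
qed

lemma is_core_iff:
  "is_core j lam \<longleftrightarrow> (\<forall>r < length lam. \<forall>c < lam!r.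
     (lam!r - Suc c) + length (filter (\<lambda>r'. c < lam!r') [Suc r..<length lam]) + 1 \<noteq> j)"
  unfolding is_core_def by (auto simp: cells_def hook_formula)

lemma ex1: "is_core 2 [3,2,1]"
  unfolding is_core_iff by (simp add: All_less_Suc numeral_eq_Suc upt_rec)
lemma ex2: "is_core 4 [4,4,2,2]"
  unfolding is_core_iff by (simp add: All_less_Suc numeral_eq_Suc upt_rec)
lemma ex3: "is_core 3 [6,4,2]"
  unfolding is_core_iff by (simp add: All_less_Suc numeral_eq_Suc upt_rec)

lemma pk1: "[3,2,1] \<in> Pkn 3 6"
  unfolding Pkn_def by (auto simp: All_less_Suc numeral_eq_Suc nth_Cons split: nat.splits)
lemma pk2: "[4,4,2,2] \<in> Pkn 4 8"
  unfolding Pkn_def by (auto simp: All_less_Suc numeral_eq_Suc nth_Cons split: nat.splits)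
lemma pk3: "[6,4,2] \<in> Pkn 3 9"
  unfolding Pkn_def by (auto simp: All_less_Suc numeral_eq_Suc nth_Cons split: nat.splits)

lemma arith_big:
  fixes A EF NL C Nm Em a k n d :: nat
  assumes h: "A + EF = a" "NL + C = a" "NL \<le> A" "k = A + Nm + NL" "n = 2*a + Nm + Em"
    "3 \<le> k" "2*k \<le> n" "1 \<le> a" "A*C + A*Em + Nm*C \<le> d" "d \<le> a"
  shows "k = 4 \<and> n = 8"
proof -
  consider "A = 0" | "C = 0" | "A = 1" "C \<ge> 1" | "C = 1" "A \<ge> 2" | "A \<ge> 2" "C \<ge> 2" by linarith
  then show ?thesis
  proof cases
    case 1
    then have "C = a" "k = Nm" using h by auto
    then have "Nm*C \<ge> 3*C" using h by simp
    then show ?thesis using h 1 \<open>C = a\<close> by linarith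
  next
    case 2
    then have "A = a" using h by simp
    have "Em \<ge> 2" using h 2 by linarith
    then have "A*Em \<ge> A*2" by simp
    then show ?thesis using h 2 \<open>A = a\<close> by linarith
  next
    case 3
    then show ?thesis
    proof (cases "C \<ge> 2")
      case True
      have "Nm*C \<ge> Nm*2" using True by simp
      moreover have "A*C = C" "A*Em = Em" using 3 by auto
      ultimately show ?thesis using h 3 by linarith
    next
      case False
      then have "C = 1" using 3 by simp
      then show ?thesis using h 3 by simp
    qed
  next
    case 4
    have "Em \<ge> 2*A - 2 + Nm" using h 4 by linarith
    then have "Em \<ge> 2" using 4 by linarith
    then have "A*Em \<ge> 2*2" using 4 mult_le_mono by blast
    moreover have "A*C = A" "Nm*C = Nm" using 4 by auto
    ultimately show ?thesis using h 4 by linarith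
  next
    case 5
    obtain a' c' where ac: "A = a' + 2" "C = c' + 2" using 5 by (metis le_add_diff_inverse2)
    have e: "A*C = a'*c' + 2*a' + 2*c' + 4" using ac by (simp add: algebra_simps)
    show ?thesis
    proof (cases "a' = 0 \<and> c' = 0")
      case True
      then have "A = 2" "C = 2" using ac by auto
      then show ?thesis using h by auto
    next
      case False
      then have "A*C \<ge> A + C + 1" using e ac by auto
      then show ?thesis using h 5 by linarith
    qed
  qed
qed

lemma arith_small:
  fixes A EF NL C Nm Em j k n d W :: nat
  assumes h: "A + EF = j" "NL + C = j" "NL \<le> A" "k = A + Nm + NL" "n = 2*j + Nm + Em"
    "3 \<le> k" "2*k \<le> n" "1 \<le> A" "1 \<le> C" "A*C + A*Em + Nm*C + W \<le> d" "d \<le> n - j"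
  shows "(k = 4 \<and> n = 8) \<or> (j = 1 \<and> A = 1 \<and> C = 1 \<and> W = 0) \<or> (j = 2 \<and> A = 1 \<and> C = 1 \<and> W \<le> 1)
     \<or> (j = 3 \<and> A = 1 \<and> C = 2 \<and> Nm = 1 \<and> W = 0)"
proof -
  have bud: "n - j = j + Nm + Em" using h by simp
  consider "A = 1" "NL = 0" | "A = 1" "NL = 1" | "A \<ge> 2" "C = 1" | "A \<ge> 2" "C \<ge> 2" using h by linarith
  then show ?thesis
  proof cases
    case 1
    have e: "A*C = C" "A*Em = Em" using 1 by auto
    have "Nm \<ge> 2" using h 1 by linarith
    have "C = j" using h 1 by simp
    show ?thesis
    proof (cases "j \<ge> 2")
      case True
      then have "Nm*C \<ge> Nm*2" using \<open>C = j\<close> by simp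
      then show ?thesis using h e bud \<open>Nm \<ge> 2\<close> \<open>C = j\<close> by linarith
    next
      case False
      then have "j = 1" "C = 1" using h \<open>C = j\<close> by auto
      then show ?thesis using h e bud 1 by auto
    qed
  next
    case 2
    note A2 = 2
    have e: "A*C = C" "A*Em = Em" using 2 by auto
    have "Nm \<ge> 1" using h 2 by linarith
    have Cj: "C + 1 = j" using h 2 by simp
    consider "j = 2" | "j = 3" | "j \<ge> 4" using h 2 by linarith
    then show ?thesis
    proof cases
      case 1
      then have "C = 1" using Cj by simp
      then show ?thesis using h e bud 1 A2 by auto
    next
      case 2
      then have "C = 2" using Cj by simp
      then have "Nm*C = 2*Nm" by simp
      then show ?thesis using h e bud 2 A2 \<open>C = 2\<close> \<open>Nm \<ge> 1\<close> by auto
    next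
      case 3
      then have "C \<ge> 3" using Cj by linarith
      then have "Nm*C \<ge> Nm*3" by simp
      then show ?thesis using h e bud Cj \<open>Nm \<ge> 1\<close> by linarith
    qed
  next
    case 3
    have e: "A*C = A" "Nm*C = Nm" using 3 by auto
    have "Em \<ge> 2" using h 3 by linarith
    have "A*Em \<ge> 2 + Em"
    proof -
      obtain a' where "A = a' + 2" using 3 by (metis le_add_diff_inverse2)
      then show ?thesis using \<open>Em \<ge> 2\<close> by (simp add: algebra_simps)
    qed
    then show ?thesis using h e bud 3 by linarith
  next
    case 4
    obtain a' c' where ac: "A = a' + 2" "C = c' + 2" using 4 by (metis le_add_diff_inverse2)
    have e: "A*C = a'*c' + 2*a' + 2*c' + 4" using ac by (simp add: algebra_simps)
    have "A*Em \<ge> 2*Em" "Nm*C \<ge> Nm*2" using 4 by simp_all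
    show ?thesis
    proof (cases "a' = 0 \<and> c' = 0")
      case True
      then have "A = 2" "C = 2" using ac by auto
      then show ?thesis using h bud \<open>A*Em \<ge> 2*Em\<close> \<open>Nm*C \<ge> Nm*2\<close> by auto
    next
      case False
      then have "A*C \<ge> A + C + 1" using e ac by auto
      then show ?thesis using h bud \<open>A*Em \<ge> 2*Em\<close> \<open>Nm*C \<ge> Nm*2\<close> by linarith
    qed
  qed
qed

definition prs :: "nat set \<Rightarrow> nat \<Rightarrow> (nat \<times> nat) set" where
  "prs Q n = {(x,y). x \<in> Q \<and> y < n \<and> y \<notin> Q \<and> x < y}"

lemma finite_prs: "finite (prs Q n)"
proof -
  have "prs Q n \<subseteq> {..<n} \<times> {..<n}" by (auto simp: prs_def)
  then show ?thesis by (rule finite_subset) auto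
qed

lemma card_split: "finite F \<Longrightarrow> card F = card (Q \<inter> F) + card (F - Q)"
proof -
  assume "finite F"
  have "F = (Q \<inter> F) \<union> (F - Q)" by auto
  moreover have "card ((Q \<inter> F) \<union> (F - Q)) = card (Q \<inter> F) + card (F - Q)"
    by (rule card_Un_disjoint) (use \<open>finite F\<close> in auto)
  ultimately show ?thesis by simp
qed

lemma block_bound:
  assumes "a \<le> b" "b \<le> n"
  shows "card (Q \<inter> {..<a}) * card ({b..<n} - Q) + card (Q \<inter> {..<a}) * card ({a..<b} - Q)
       + card (Q \<inter> {a..<b}) * card ({b..<n} - Q)
       + (card (prs Q n \<inter> ({..<a} \<times> {..<a})) + card (prs Q n \<inter> ({a..<b} \<times> {a..<b}))
       + card (prs Q n \<inter> ({b..<n} \<times> {b..<n}))) \<le> card (prs Q n)"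
proof -
  define S1 where "S1 = (Q \<inter> {..<a}) \<times> ({b..<n} - Q)"
  define S2 where "S2 = (Q \<inter> {..<a}) \<times> ({a..<b} - Q)"
  define S3 where "S3 = (Q \<inter> {a..<b}) \<times> ({b..<n} - Q)"
  define S4 where "S4 = prs Q n \<inter> ({..<a} \<times> {..<a})"
  define S5 where "S5 = prs Q n \<inter> ({a..<b} \<times> {a..<b})"
  define S6 where "S6 = prs Q n \<inter> ({b..<n} \<times> {b..<n})"
  have fin: "finite S1" "finite S2" "finite S3" "finite S4" "finite S5" "finite S6"
    unfolding S1_def S2_def S3_def S4_def S5_def S6_def using finite_prs by auto
  have sub: "S1 \<union> S2 \<union> S3 \<union> S4 \<union> S5 \<union> S6 \<subseteq> prs Q n"
    unfolding S1_def S2_def S3_def S4_def S5_def S6_def prs_def using assms by auto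
  have c1: "card (S1 \<union> S2) = card S1 + card S2"
    by (rule card_Un_disjoint) (use fin assms in \<open>auto simp: S1_def S2_def\<close>)
  have c2: "card (S1 \<union> S2 \<union> S3) = card (S1 \<union> S2) + card S3"
    by (rule card_Un_disjoint) (use fin assms in \<open>auto simp: S1_def S2_def S3_def\<close>)
  have c3: "card (S1 \<union> S2 \<union> S3 \<union> S4) = card (S1 \<union> S2 \<union> S3) + card S4"
    by (rule card_Un_disjoint) (use fin assms in \<open>auto simp: S1_def S2_def S3_def S4_def\<close>)
  have c4: "card (S1 \<union> S2 \<union> S3 \<union> S4 \<union> S5) = card (S1 \<union> S2 \<union> S3 \<union> S4) + card S5"
    by (rule card_Un_disjoint) (use fin assms in \<open>auto simp: S1_def S2_def S3_def S4_def S5_def\<close>)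
  have c5: "card (S1 \<union> S2 \<union> S3 \<union> S4 \<union> S5 \<union> S6) = card (S1 \<union> S2 \<union> S3 \<union> S4 \<union> S5) + card S6"
    by (rule card_Un_disjoint) (use fin assms in \<open>auto simp: S1_def S2_def S3_def S4_def S5_def S6_def\<close>)
  have "card (S1 \<union> S2 \<union> S3 \<union> S4 \<union> S5 \<union> S6) \<le> card (prs Q n)"
    by (rule card_mono[OF finite_prs sub])
  then show ?thesis using c1 c2 c3 c4 c5
    unfolding S1_def S2_def S3_def S4_def S5_def S6_def by (simp add: card_cartesian_product)
qed

lemma clos_iter:
  fixes t :: nat
  assumes cl: "\<forall>x\<in>Q. j \<le> x \<longrightarrow> x - j \<in> Q"
  shows "x \<in> Q \<Longrightarrow> t*j \<le> x \<Longrightarrow> x - t*j \<in> Q"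
proof (induction t)
  case 0 then show ?case by simp
next
  case (Suc t)
  then have "x - t*j \<in> Q" by simp
  moreover have "j \<le> x - t*j" using Suc.prems by simp
  ultimately have "x - t*j - j \<in> Q" using cl by blast
  then show ?case by (simp add: diff_diff_add add.commute)
qed

lemma clos_mod:
  fixes x j :: nat
  assumes cl: "\<forall>x\<in>Q. j \<le> x \<longrightarrow> x - j \<in> Q" and "x \<in> Q"
  shows "x mod j \<in> Q"
proof -
  have "x - (x div j)*j \<in> Q" by (rule clos_iter[OF cl \<open>x \<in> Q\<close>]) simp
  then show ?thesis by (simp add: minus_div_mult_eq_mod)
qed

lemma card_ge2: "finite S \<Longrightarrow> p \<in> S \<Longrightarrow> q \<in> S \<Longrightarrow> p \<noteq> q \<Longrightarrow> 2 \<le> card S"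
proof -
  assume a: "finite S" "p \<in> S" "q \<in> S" "p \<noteq> q"
  have "card {p,q} \<le> card S" by (rule card_mono) (use a in auto)
  then show ?thesis using a by simp
qed

lemma card_ge1:
  assumes "finite S" "p \<in> S" shows "1 \<le> card S"
proof -
  have "S \<noteq> {}" using assms by auto
  then show ?thesis using assms(1) by (simp add: Suc_le_eq card_gt_0_iff)
qed

lemma three_split:
  fixes a b n :: nat
  assumes "a \<le> b" "b \<le> n" "Q \<subseteq> {..<n}"
  shows "card Q = card (Q \<inter> {..<a}) + card (Q \<inter> {a..<b}) + card (Q \<inter> {b..<n})"
proof -
  have e: "Q = (Q \<inter> {..<a}) \<union> (Q \<inter> {a..<b}) \<union> (Q \<inter> {b..<n})" using assms by auto
  have "card ((Q \<inter> {..<a}) \<union> (Q \<inter> {a..<b}) \<union> (Q \<inter> {b..<n}))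
      = card ((Q \<inter> {..<a}) \<union> (Q \<inter> {a..<b})) + card (Q \<inter> {b..<n})"
    by (rule card_Un_disjoint) (use assms in auto)
  also have "card ((Q \<inter> {..<a}) \<union> (Q \<inter> {a..<b})) = card (Q \<inter> {..<a}) + card (Q \<inter> {a..<b})"
    by (rule card_Un_disjoint) (use assms in auto)
  finally show ?thesis using e by simp
qed

lemma shift_into_top:
  fixes y n j :: nat
  assumes "y < n" "0 < j"
  shows "\<exists>t. n - j \<le> y + t*j \<and> y + t*j < n"
proof -
  define a where "a = n - 1 - y"
  define t where "t = a div j"
  have "t*j \<le> a" unfolding t_def by (rule div_times_less_eq_dividend)
  moreover have "a < t*j + j" unfolding t_def
    using div_mult_mod_eq[of a j] mod_less_divisor[OF assms(2), of a] by linarith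
  ultimately show ?thesis using assms unfolding a_def by (intro exI[of _ t]) linarith
qed

lemma mod_inj_top:
  fixes j n :: nat
  assumes "0 < j"
  shows "inj_on (\<lambda>y. y mod j) {n-j..<n}"
proof (rule inj_onI)
  fix y1 y2 assume a: "y1 \<in> {n-j..<n}" "y2 \<in> {n-j..<n}" "y1 mod j = y2 mod j"
  show "y1 = y2"
  proof (rule ccontr)
    assume ne: "y1 \<noteq> y2"
    have key: "False" if "u \<in> {n-j..<n}" "v \<in> {n-j..<n}" "u mod j = v mod j" "u < v" for u v
    proof -
      have "j dvd v - u" using that(3,4) mod_eq_dvd_iff_nat[of u v j] by simp
      moreover have "0 < v - u" "v - u < j" using that by auto
      ultimately show False using dvd_imp_le by fastforce
    qed
    show False
    proof (cases "y1 < y2")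
      case True then show ?thesis using key[OF a] by blast
    next
      case False then have "y2 < y1" using ne by linarith
      then show ?thesis using key[OF a(2) a(1)] a(3) by metis
    qed
  qed
qed

lemma core_big:
  fixes Q :: "nat set" and k n j :: nat
  assumes Qn: "Q \<subseteq> {..<n}" and cQ: "card Q = k" and k3: "3 \<le> k" and kn: "2*k \<le> n"
    and j1: "1 \<le> j" and jn: "j < n" and cl: "\<forall>x\<in>Q. j \<le> x \<longrightarrow> x - j \<in> Q"
    and dle: "card (prs Q n) \<le> n - j" and big: "\<not> 2*j \<le> n"
  shows "k = 4 \<and> n = 8"
proof -
  have finQ: "finite Q" using Qn finite_subset by blast
  define A where "A = card (Q \<inter> {..<n-j})"
  define EF where "EF = card ({..<n-j} - Q)"
  define NL where "NL = card (Q \<inter> {j..<n})"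
  define C where "C = card ({j..<n} - Q)"
  define Nm where "Nm = card (Q \<inter> {n-j..<j})"
  define Em where "Em = card ({n-j..<j} - Q)"
  have h1: "A + EF = n - j" using card_split[of "{..<n-j}" Q] unfolding A_def EF_def by simp
  have h2: "NL + C = n - j" using card_split[of "{j..<n}" Q] unfolding NL_def C_def by simp
  have h5: "Nm + Em = j - (n - j)" using card_split[of "{n-j..<j}" Q] unfolding Nm_def Em_def by simp
  have h4: "k = A + Nm + NL"
  proof -
    have "n - j \<le> j" "j \<le> n" using big jn by auto
    then show ?thesis using three_split[of "n-j" j n Q] Qn cQ unfolding A_def Nm_def NL_def by simp
  qed
  have h3: "NL \<le> A"
  proof -
    have "inj_on (\<lambda>y. y - j) (Q \<inter> {j..<n})" by (rule inj_onI) auto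
    moreover have "(\<lambda>y. y - j) ` (Q \<inter> {j..<n}) \<subseteq> Q \<inter> {..<n-j}" using cl by auto
    ultimately show ?thesis unfolding NL_def A_def
      using card_inj_on_le[of "\<lambda>y. y - j" "Q \<inter> {j..<n}" "Q \<inter> {..<n-j}"] finQ by auto
  qed
  have bb: "A*C + A*Em + Nm*C \<le> card (prs Q n)"
  proof -
    have "n - j \<le> j" "j \<le> n" using big jn by auto
    from block_bound[OF this, of Q] show ?thesis unfolding A_def C_def Em_def Nm_def by linarith
  qed
  show ?thesis
    by (rule arith_big[of A EF "n-j" NL C k Nm n Em "card (prs Q n)"])
       (use h1 h2 h3 h4 h5 bb dle k3 kn big jn in auto)
qed

lemma core_small:
  fixes Q :: "nat set" and k n j :: nat
  assumes Qn: "Q \<subseteq> {..<n}" and cQ: "card Q = k" and k3: "3 \<le> k" and kn: "2*k \<le> n"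
    and j1: "1 \<le> j" and jn: "j < n" and cl: "\<forall>x\<in>Q. j \<le> x \<longrightarrow> x - j \<in> Q"
    and dle: "card (prs Q n) \<le> n - j" and small: "2*j \<le> n"
  shows "(k,n) \<in> {(3,6),(4,8),(3,9)}"
proof -
  have finQ: "finite Q" using Qn finite_subset by blast
  have jpos: "0 < j" using j1 by simp
  have up: "y \<in> Q" if "y + t*j \<in> Q" for y t
    using clos_iter[OF cl that, of t] by simp
  define A where "A = card (Q \<inter> {..<j})"
  define EF where "EF = card ({..<j} - Q)"
  define NL where "NL = card (Q \<inter> {n-j..<n})"
  define C where "C = card ({n-j..<n} - Q)"
  define Nm where "Nm = card (Q \<inter> {j..<n-j})"
  define Em where "Em = card ({j..<n-j} - Q)"
  define WF where "WF = card (prs Q n \<inter> ({..<j} \<times> {..<j}))"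
  define WM where "WM = card (prs Q n \<inter> ({j..<n-j} \<times> {j..<n-j}))"
  define WL where "WL = card (prs Q n \<inter> ({n-j..<n} \<times> {n-j..<n}))"
  have finW: "finite (prs Q n \<inter> X)" for X using finite_prs by blast
  have h1: "A + EF = j" using card_split[of "{..<j}" Q] unfolding A_def EF_def by simp
  have h2: "NL + C = j" using card_split[of "{n-j..<n}" Q] jn unfolding NL_def C_def by simp
  have h5: "Nm + Em = n - 2*j" using card_split[of "{j..<n-j}" Q] unfolding Nm_def Em_def by simp
  have ord: "j \<le> n - j" "n - j \<le> n" using small by auto
  have h4: "k = A + Nm + NL"
    using three_split[OF ord Qn] cQ unfolding A_def Nm_def NL_def by simp
  have h3: "NL \<le> A"
  proof -
    have "inj_on (\<lambda>y. y mod j) (Q \<inter> {n-j..<n})"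
      using mod_inj_top[OF jpos, of n] by (rule inj_on_subset) auto
    moreover have "(\<lambda>y. y mod j) ` (Q \<inter> {n-j..<n}) \<subseteq> Q \<inter> {..<j}"
      using clos_mod[OF cl] mod_less_divisor[OF jpos] by auto
    ultimately show ?thesis unfolding NL_def A_def
      using card_inj_on_le[of "\<lambda>y. y mod j" "Q \<inter> {n-j..<n}" "Q \<inter> {..<j}"] finQ by auto
  qed
  have A1: "1 \<le> A"
  proof -
    obtain x where "x \<in> Q" using k3 cQ by fastforce
    then have "x mod j \<in> Q \<inter> {..<j}" using clos_mod[OF cl] mod_less_divisor[OF jpos] by auto
    then show ?thesis unfolding A_def using card_ge1[of "Q \<inter> {..<j}"] finQ by blast
  qed
  have C1: "1 \<le> C"
  proof -
    have "Q \<noteq> {..<n}" using cQ kn k3 by auto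
    then obtain y where y: "y < n" "y \<notin> Q" using Qn by blast
    obtain t where t: "n - j \<le> y + t*j" "y + t*j < n" using shift_into_top[OF y(1) jpos] by blast
    have "y + t*j \<notin> Q" using up y(2) by blast
    then have "y + t*j \<in> {n-j..<n} - Q" using t by auto
    then show ?thesis unfolding C_def using card_ge1[of "{n-j..<n} - Q"] by blast
  qed
  have bb: "A*C + A*Em + Nm*C + (WF + WM + WL) \<le> card (prs Q n)"
    using block_bound[OF ord, of Q] unfolding A_def C_def Em_def Nm_def WF_def WM_def WL_def by linarith
  have ar: "(k = 4 \<and> n = 8) \<or> (j = 1 \<and> A = 1 \<and> C = 1 \<and> WF + WM + WL = 0)
     \<or> (j = 2 \<and> A = 1 \<and> C = 1 \<and> WF + WM + WL \<le> 1)
     \<or> (j = 3 \<and> A = 1 \<and> C = 2 \<and> Nm = 1 \<and> WF + WM + WL = 0)"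
    by (rule arith_small[of A EF j NL C k Nm n Em "WF + WM + WL" "card (prs Q n)"])
       (use h1 h2 h3 h4 h5 bb dle k3 kn small A1 C1 in auto)
  from ar consider (c48) "k = 4 \<and> n = 8" | (c1) "j = 1" "A = 1" "C = 1" "WF + WM + WL = 0"
    | (c2) "j = 2" "A = 1" "C = 1" "WF + WM + WL \<le> 1"
    | (c3) "j = 3" "A = 1" "C = 2" "Nm = 1" "WF + WM + WL = 0" by blast
  then show ?thesis
  proof cases
    case c48 then show ?thesis by simp
  next
    case c1
    have "1 \<in> Q"
    proof -
      have "\<not> Q \<subseteq> {0}"
      proof
        assume a0: "Q \<subseteq> {0}"
        have "card Q \<le> card {0::nat}" by (rule card_mono) (use a0 in auto)
        then have "card Q \<le> 1" by simp
        with cQ k3 show False by simp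
      qed
      then obtain x where x: "x \<in> Q" "x \<noteq> 0" by blast
      then have "x - (x - 1)*j \<in> Q" using clos_iter[OF cl, of x "x-1"] c1 by simp
      then show ?thesis using c1 x by simp
    qed
    have "n - 2 \<notin> Q"
    proof
      assume a: "n - 2 \<in> Q"
      have "{..<n-1} \<subseteq> Q"
      proof
        fix y assume y: "y \<in> {..<n-1}"
        have "n - 2 - (n-2-y)*j \<in> Q" using clos_iter[OF cl a, of "n-2-y"] c1 by simp
        moreover have "n - 2 - (n-2-y)*j = y" using c1 y by auto
        ultimately show "y \<in> Q" by simp
      qed
      then have "card {..<n-1} \<le> card Q" by (rule card_mono[OF finQ])
      then have "n - 1 \<le> k" using cQ by simp
      then show False using kn k3 by linarith
    qed
    have "(1, n-2) \<in> prs Q n \<inter> ({j..<n-j} \<times> {j..<n-j})"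
      using \<open>1 \<in> Q\<close> \<open>n-2 \<notin> Q\<close> c1 kn k3 unfolding prs_def by auto
    then have "1 \<le> WM" unfolding WM_def by (rule card_ge1[OF finW])
    then show ?thesis using c1 by simp
  next
    case c2
    have NL1: "NL = 1" using h2 c2 by simp
    have Nm1: "1 \<le> Nm" using h4 NL1 c2 k3 by linarith
    have Fc: "card (Q \<inter> {..<2}) = 1" using c2 A_def by simp
    have n6: "6 \<le> n" using kn k3 by linarith
    have not01: "\<not> (0 \<in> Q \<and> 1 \<in> Q)"
    proof
      assume "0 \<in> Q \<and> 1 \<in> Q"
      then have "{0,1} \<subseteq> Q \<inter> {..<2}" by auto
      then have "card {0::nat,1} \<le> card (Q \<inter> {..<2})" using card_mono finQ by blast
      then show False using Fc by simp
    qed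
    have "Q \<inter> {..<2} \<noteq> {}" using Fc by auto
    then have "0 \<in> Q \<or> 1 \<in> Q" by (auto simp: less_2_cases_iff)
    then show ?thesis
    proof
      assume q0: "0 \<in> Q"
      then have q1: "1 \<notin> Q" using not01 by blast
      have "Q \<inter> {j..<n-j} \<noteq> {}" using Nm1 unfolding Nm_def by auto
      then obtain x where x: "x \<in> Q" "2 \<le> x" using c2 by auto
      have "x mod 2 \<in> Q" using clos_mod[OF cl x(1)] c2 by simp
      moreover have "x mod 2 = 0 \<or> x mod 2 = 1" by arith
      ultimately have xe: "x mod 2 = 0" using q1 by auto
      have "x - (x div 2 - 1)*2 \<in> Q" using clos_iter[OF cl x(1), of "x div 2 - 1"] c2 by simp
      moreover have "x - (x div 2 - 1)*2 = 2"
      proof -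
        have "x div 2 * 2 = x" using xe by (metis add_0_right div_mult_mod_eq)
        then show ?thesis using x(2) by (simp add: diff_mult_distrib)
      qed
      ultimately have q2: "2 \<in> Q" by simp
      have q3: "3 \<notin> Q"
      proof
        assume q3': "3 \<in> Q"
        have "(3::nat) mod j \<in> Q" by (rule clos_mod[OF cl q3'])
        then have "(3::nat) mod 2 \<in> Q" using c2 by simp
        then show False using q1 by simp
      qed
      have "(0, 1) \<in> prs Q n \<inter> ({..<j} \<times> {..<j})" using q0 q1 c2 n6 unfolding prs_def by auto
      then have "1 \<le> WF" unfolding WF_def by (rule card_ge1[OF finW])
      moreover have "(2, 3) \<in> prs Q n \<inter> ({j..<n-j} \<times> {j..<n-j})" using q2 q3 c2 n6 unfolding prs_def by auto
      then have "1 \<le> WM" unfolding WM_def by (rule card_ge1[OF finW])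
      ultimately show ?thesis using c2 by simp
    next
      assume q1: "1 \<in> Q"
      then have q0: "0 \<notin> Q" using not01 by blast
      have ev: "odd e" if "e \<in> Q" for e
      proof (rule ccontr)
        assume "\<not> odd e"
        then have "e mod 2 = 0" by simp
        then show False using clos_mod[OF cl that] c2 q0 by simp
      qed
      have od: "z \<in> Q" if "w \<in> Q" "odd z" "z \<le> w" for w z
      proof -
        have "odd w" using ev that(1) by simp
        then have "even (w - z)" using that(2,3) by simp
        then have "(w - z) div 2 * 2 = w - z" by simp
        then have "w - ((w - z) div 2)*2 = z" using that(3) by simp
        moreover have "w - ((w - z) div 2)*2 \<in> Q" using clos_iter[OF cl that(1), of "(w - z) div 2"] c2 by simp
        ultimately show ?thesis by simp
      qed
      have "Q \<inter> {n-j..<n} \<noteq> {}" using NL1 unfolding NL_def by auto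
      then obtain y where y: "y \<in> Q" "n - 2 \<le> y" "y < n" using c2 by auto
      have yo: "odd y" using ev y(1) by simp
      show ?thesis
      proof (cases "odd n")
        case True
        have "y = n - 2 \<or> y = n - 1" using y by linarith
        moreover have "y \<noteq> n - 1" using yo True n6 by presburger
        ultimately have yv: "y = n - 2" by blast
        have n7: "7 \<le> n" using True n6 by presburger
        have "n - 1 \<notin> Q"
        proof
          assume "n - 1 \<in> Q"
          then have "odd (n - 1)" by (rule ev)
          with True n6 show False by presburger
        qed
        then have "(n-2, n-1) \<in> prs Q n \<inter> ({n-j..<n} \<times> {n-j..<n})" using y yv c2 n6 unfolding prs_def by auto
        then have wl: "1 \<le> WL" unfolding WL_def by (rule card_ge1[OF finW])
        have "3 \<in> Q" using od[OF y(1), of 3] yv n7 by simp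
        moreover have "4 \<notin> Q" using ev[of 4] by auto
        ultimately have "(3,4) \<in> prs Q n \<inter> ({j..<n-j} \<times> {j..<n-j})"
          using c2 n7 unfolding prs_def by auto
        then have "1 \<le> WM" unfolding WM_def by (rule card_ge1[OF finW])
        with wl have "2 \<le> WF + WM + WL" by simp
        then show ?thesis using c2 by simp
      next
        case False
        have "y = n - 2 \<or> y = n - 1" using y by linarith
        moreover have "y \<noteq> n - 2" using yo False n6 by presburger
        ultimately have yv: "y = n - 1" by blast
        have "n = 6 \<or> n = 8 \<or> 10 \<le> n" using False n6 by presburger
        then consider "n = 6" | "n = 8" | "10 \<le> n" by blast
        then show ?thesis
        proof cases
          case 1 then show ?thesis using kn k3 by simp
        next
          case 2
          have "{1,3,5,7} \<subseteq> Q" using od[OF y(1)] yv 2 by auto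
          then have "card {1::nat,3,5,7} \<le> k" using card_mono[OF finQ] cQ by blast
          then show ?thesis using 2 kn by simp
        next
          case 3
          have "3 \<in> Q" "5 \<in> Q" using od[OF y(1)] yv 3 by auto
          moreover have "4 \<notin> Q" "6 \<notin> Q" using ev[of 4] ev[of 6] by auto
          ultimately have "(3,4) \<in> prs Q n \<inter> ({j..<n-j} \<times> {j..<n-j})"
             "(5,6) \<in> prs Q n \<inter> ({j..<n-j} \<times> {j..<n-j})"
            using c2 3 unfolding prs_def by auto
          then have "2 \<le> WM" unfolding WM_def by (rule card_ge2[OF finW]) auto
          then show ?thesis using c2 by simp
        qed
      qed
    qed
  next
    case c3
    have NL1: "NL = 1" using h2 c3 by simp
    have k3': "k = 3" using h4 NL1 c3 by simp
    have n6: "6 \<le> n" using small c3 by simp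
    have "card (Q \<inter> {..<3}) = 1" using c3 A_def by simp
    then obtain t where t: "Q \<inter> {..<3} = {t}" by (rule card_1_singletonE)
    have "card (Q \<inter> {n-3..<n}) = 1" using NL1 NL_def c3 by simp
    then obtain y where y: "Q \<inter> {n-3..<n} = {y}" by (rule card_1_singletonE)
    have tQ: "t \<in> Q" "t < 3" using t by (simp_all add: set_eq_iff) blast+
    have yQ: "y \<in> Q" "n - 3 \<le> y" "y < n" using y by (simp_all add: set_eq_iff) blast+
    show ?thesis
    proof (cases "t = 2")
      case False
      have "t < 2" using tQ False by linarith
      have "2 \<notin> Q"
      proof
        assume "2 \<in> Q"
        then have "(2::nat) \<in> Q \<inter> {..<3}" by simp
        then show False using t False by simp
      qed
      then have "(t, 2) \<in> prs Q n \<inter> ({..<j} \<times> {..<j})" using tQ \<open>t < 2\<close> c3 n6 unfolding prs_def by simp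
      then have "1 \<le> WF" unfolding WF_def by (rule card_ge1[OF finW])
      then show ?thesis using c3 by simp
    next
      case True
      show ?thesis
      proof (cases "y = n - 1")
        case False
        have "y < n - 1" using yQ False by linarith
        have "n - 1 \<notin> Q"
        proof
          assume "n - 1 \<in> Q"
          then have "n - 1 \<in> Q \<inter> {n-3..<n}" using n6 by simp
          then show False using y False by simp
        qed
        then have "(y, n-1) \<in> prs Q n \<inter> ({n-j..<n} \<times> {n-j..<n})" using yQ \<open>y < n - 1\<close> c3 n6 unfolding prs_def by simp
        then have "1 \<le> WL" unfolding WL_def by (rule card_ge1[OF finW])
        then show ?thesis using c3 by simp
      next
        case yv: True
        have qn1: "n - 1 \<in> Q" using yQ yv by simp
        have "(n - 1) mod j \<in> Q" by (rule clos_mod[OF cl qn1])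
        then have "(n - 1) mod 3 \<in> Q \<inter> {..<3}" using c3 by simp
        then have m2: "(n - 1) mod 3 = 2" using t True by simp
        have n9: "n \<le> 9"
        proof (rule ccontr)
          assume n10: "\<not> n \<le> 9"
          have "n - 1 - 1*j \<in> Q" by (rule clos_iter[OF cl qn1]) (use c3 n10 in simp)
          moreover have "n - 1 - 2*j \<in> Q" by (rule clos_iter[OF cl qn1]) (use c3 n10 in simp)
          moreover have "n - 1 - 3*j \<in> Q" by (rule clos_iter[OF cl qn1]) (use c3 n10 in simp)
          ultimately have "{n-1, n-4, n-7, n-10} \<subseteq> Q" using qn1 c3 by simp
          then have "card {n-1, n-4, n-7, n-10} \<le> card Q" by (rule card_mono[OF finQ])
          moreover have "card {n-1, n-4, n-7, n-10} = 4"
          proof -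
            define m where "m = n - 10"
            have "n = m + 10" using n10 unfolding m_def by linarith
            then show ?thesis by simp
          qed
          ultimately show False using k3' cQ by simp
        qed
        have "n = 6 \<or> n = 7 \<or> n = 8 \<or> n = 9" using n6 n9 by linarith
        then consider "n = 6" | "n = 9" using m2 by auto
        then show ?thesis
        proof cases
          case 1
          then have "Nm = 0" unfolding Nm_def using c3 by simp
          then show ?thesis using c3 by simp
        next
          case 2 then show ?thesis using k3' by simp
        qed
      qed
    qed
  qed
qed

lemma core:
  fixes Q :: "nat set" and k n j :: nat
  assumes Qn: "Q \<subseteq> {..<n}" and cQ: "card Q = k" and k3: "3 \<le> k" and kn: "2*k \<le> n"
    and j1: "1 \<le> j" and jn: "j < n" and cl: "\<forall>x\<in>Q. j \<le> x \<longrightarrow> x - j \<in> Q"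
    and dle: "card (prs Q n) \<le> n - j"
  shows "(k,n) \<in> {(3,6),(4,8),(3,9)}"
proof (cases "2*j \<le> n")
  case True
  then show ?thesis using core_small[OF assms] by blast
next
  case False
  then show ?thesis using core_big[OF assms] by simp
qed

lemma Pkn_props:
  assumes "lam \<in> Pkn k n"
  shows "length lam = k" "\<And>r. r < k \<Longrightarrow> lam!r \<le> n - k" "\<And>r s. r \<le> s \<Longrightarrow> s < k \<Longrightarrow> lam!s \<le> lam!r"
  using assms unfolding Pkn_def by auto

lemma p_decr:
  assumes "lam \<in> Pkn k n" "r < s" "s < k"
  shows "lam!s + (k - 1 - s) < lam!r + (k - 1 - r)"
  using Pkn_props(3)[OF assms(1), of r s] assms by linarith

lemma p_closure:
  fixes k n j :: nat
  assumes P: "lam \<in> Pkn k n" and core: "is_core j lam" and j1: "1 \<le> j"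
    and r: "r < k" and pj: "j \<le> lam!r + (k - 1 - r)"
  shows "\<exists>r'<k. lam!r' + (k - 1 - r') = lam!r + (k - 1 - r) - j"
proof (rule ccontr)
  assume nex: "\<not> ?thesis"
  define p where "p = (\<lambda>r. lam!r + (k - 1 - r))"
  define xx where "xx = p r - j"
  have len: "length lam = k" using Pkn_props(1)[OF P] .
  have mono: "lam!s \<le> lam!t" if "t \<le> s" "s < k" for s t using Pkn_props(3)[OF P that] .
  have notx: "p s \<noteq> xx" if "s < k" for s using nex that unfolding p_def xx_def by blast
  define S where "S = {s. r < s \<and> s \<le> k \<and> (s = k \<or> p s < xx)}"
  have kS: "k \<in> S" using r unfolding S_def by simp
  define r2 where "r2 = (LEAST s. s \<in> S)"
  have r2S: "r2 \<in> S" unfolding r2_def by (rule LeastI[of "\<lambda>s. s \<in> S", OF kS])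
  have r2min: "\<And>s. s \<in> S \<Longrightarrow> r2 \<le> s" unfolding r2_def by (rule Least_le)
  have r2a: "r < r2" "r2 \<le> k" using r2S unfolding S_def by auto
  have r2b: "r2 < k \<Longrightarrow> p r2 < xx" using r2S unfolding S_def by auto
  have above: "xx < p s" if "r \<le> s" "s < r2" for s
  proof (cases "s = r")
    case True then show ?thesis using pj j1 unfolding xx_def p_def by simp
  next
    case False
    then have "r < s" using that by simp
    have "s < k" using that r2a by simp
    have "s \<notin> S" using r2min that(2) by force
    then have "\<not> p s < xx" using \<open>r < s\<close> \<open>s < k\<close> unfolding S_def by simp
    then show ?thesis using notx[OF \<open>s < k\<close>] by simp
  qed
  have xge: "k - r2 \<le> xx"
  proof (cases "r2 < k")
    case True then show ?thesis using r2b[OF True] unfolding p_def by simp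
  next
    case False then show ?thesis using r2a by simp
  qed
  define c where "c = xx - (k - r2)"
  have cx: "c + (k - r2) = xx" unfolding c_def using xge by simp
  have big: "c < lam!s" if "s < r2" for s
  proof -
    have "xx < p (r2 - 1)" using above[of "r2 - 1"] r2a by simp
    then have "c < lam!(r2 - 1)" using cx r2a unfolding p_def by simp
    moreover have "lam!(r2-1) \<le> lam!s" using mono[of s "r2 - 1"] that r2a by simp
    ultimately show ?thesis by simp
  qed
  have small: "lam!s \<le> c" if "r2 \<le> s" "s < k" for s
  proof -
    have "r2 < k" using that by simp
    have "p r2 < xx" using r2b[OF \<open>r2 < k\<close>] .
    then have "lam!r2 \<le> c" using cx \<open>r2 < k\<close> unfolding p_def by simp
    moreover have "lam!s \<le> lam!r2" using mono that by simp
    ultimately show ?thesis by simp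
  qed
  have cr: "c < lam!r" using big r2a by simp
  have cell: "(r, c) \<in> cells lam" unfolding cells_def using cr r len by simp
  have s1: "{c'. (r, c') \<in> cells lam \<and> c < c'} = {Suc c..<lam!r}"
    using r len unfolding cells_def by auto
  have s2: "{r'. (r', c) \<in> cells lam \<and> r < r'} = {Suc r..<r2}"
  proof (rule set_eqI)
    fix s
    show "s \<in> {r'. (r', c) \<in> cells lam \<and> r < r'} \<longleftrightarrow> s \<in> {Suc r..<r2}"
    proof
      assume "s \<in> {r'. (r', c) \<in> cells lam \<and> r < r'}"
      then have "s < k" "c < lam!s" "r < s" unfolding cells_def using len by auto
      then have "s < r2" using small[of s] by (meson not_le not_less)
      then show "s \<in> {Suc r..<r2}" using \<open>r < s\<close> by simp
    next
      assume "s \<in> {Suc r..<r2}"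
      then have "r < s" "s < r2" by auto
      then show "s \<in> {r'. (r', c) \<in> cells lam \<and> r < r'}"
        unfolding cells_def using big[of s] r2a len by simp
    qed
  qed
  have "hook_length lam (r, c) = (lam!r - Suc c) + (r2 - Suc r) + 1"
    unfolding hook_length_def using s1 s2 by simp
  also have "\<dots> = j"
  proof -
    have "lam!r + (k - 1 - r) = xx + j" using pj unfolding xx_def p_def by simp
    then show ?thesis using cx cr r2a r by linarith
  qed
  finally have "hook_length lam (r, c) = j" .
  then show False using core cell unfolding is_core_def by blast
qed

lemma card_prs_lam:
  fixes k n :: nat
  assumes P: "lam \<in> Pkn k n" and kn: "k \<le> n"
  shows "card (prs ((\<lambda>r. lam!r + (k - 1 - r)) ` {..<k}) n) = k*(n-k) - sum_list lam"
proof -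
  define p where "p = (\<lambda>r. lam!r + (k - 1 - r))"
  define Q where "Q = p ` {..<k}"
  have len: "length lam = k" using Pkn_props(1)[OF P] .
  have decr: "p s < p r" if "r < s" "s < k" for r s using p_decr[OF P that] unfolding p_def .
  have pn: "p r < n" if "r < k" for r using Pkn_props(2)[OF P that] that kn unfolding p_def by linarith
  have inj: "inj_on p {..<k}"
  proof (rule inj_onI)
    fix r s assume "r \<in> {..<k}" "s \<in> {..<k}" "p r = p s"
    then show "r = s" using decr by (metis lessThan_iff less_irrefl linorder_neqE_nat)
  qed
  define B where "B = (\<lambda>r. {p r} \<times> ({p r<..<n} - Q))"
  have prs_eq: "prs Q n = (\<Union>r\<in>{..<k}. B r)"
    unfolding prs_def B_def Q_def by auto
  have disj: "\<forall>r\<in>{..<k}. \<forall>s\<in>{..<k}. r \<noteq> s \<longrightarrow> B r \<inter> B s = {}"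
    unfolding B_def using inj by (auto dest: inj_onD)
  have cB: "card (B r) = n - k - lam!r" if r: "r < k" for r
  proof -
    have int: "{p r<..<n} \<inter> Q = p ` {..<r}"
    proof (rule set_eqI)
      fix y
      show "y \<in> {p r<..<n} \<inter> Q \<longleftrightarrow> y \<in> p ` {..<r}"
      proof
        assume "y \<in> {p r<..<n} \<inter> Q"
        then obtain s where s: "s < k" "y = p s" "p r < p s" unfolding Q_def by auto
        have "s < r"
        proof (rule ccontr)
          assume "\<not> s < r"
          then have "r = s \<or> r < s" by linarith
          then show False using decr[of r s] s by auto
        qed
        then show "y \<in> p ` {..<r}" using s by auto
      next
        assume "y \<in> p ` {..<r}"
        then obtain s where s: "s < r" "y = p s" by auto
        then show "y \<in> {p r<..<n} \<inter> Q" using decr[OF s(1) r] pn[of s] r unfolding Q_def by auto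
      qed
    qed
    have "inj_on p {..<r}" by (rule inj_on_subset[OF inj]) (use r in auto)
    then have cint: "card ({p r<..<n} \<inter> Q) = r"
      unfolding int by (simp add: card_image)
    have "card (B r) = card ({p r<..<n} - Q)" unfolding B_def by (simp add: card_cartesian_product)
    also have "\<dots> = card {p r<..<n} - card ({p r<..<n} \<inter> Q)"
      by (rule card_Diff_subset_Int) simp
    also have "\<dots> = (n - Suc (p r)) - r" using cint by simp
    also have "\<dots> = n - k - lam!r" unfolding p_def using r pn[OF r] unfolding p_def by simp
    finally show ?thesis .
  qed
  have "card (prs Q n) = (\<Sum>r<k. card (B r))"
    unfolding prs_eq by (rule card_UN_disjoint) (use disj in \<open>auto simp: B_def\<close>)
  also have "\<dots> = (\<Sum>r<k. (n - k) - lam!r)" using cB by simp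
  also have "\<dots> = (\<Sum>r<k. (n - k)) - (\<Sum>r<k. lam!r)"
    by (rule sum_subtractf_nat) (use Pkn_props(2)[OF P] in simp)
  also have "(\<Sum>r<k. lam!r) = sum_list lam"
    using sum_list_sum_nth[of lam] len by (simp add: atLeast0LessThan)
  finally show ?thesis unfolding Q_def p_def by (simp add: mult.commute)
qed

lemma p_inj:
  assumes P: "lam \<in> Pkn k n"
  shows "inj_on (\<lambda>r. lam!r + (k - 1 - r)) {..<k}"
proof (rule inj_onI)
  fix r s assume a: "r \<in> {..<k}" "s \<in> {..<k}" "lam!r + (k - 1 - r) = lam!s + (k - 1 - s)"
  show "r = s"
  proof (rule ccontr)
    assume "r \<noteq> s"
    then have "r < s \<or> s < r" by linarith
    then show False using p_decr[OF P, of r s] p_decr[OF P, of s r] a by auto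
  qed
qed

theorem lemma3p3:
  fixes k n :: nat
  assumes "3 \<le> k" and "2 * k \<le> n"
  shows "(\<exists>lam i. lam \<in> Pkn k n \<and> 1 \<le> i \<and> i \<le> n - 1
            \<and> int (size_part lam) \<ge> int k * (int n - int k) - int i
            \<and> is_core (n - i) lam)
         \<longleftrightarrow> (k, n) \<in> {(3, 6), (4, 8), (3, 9)}"
proof
  assume "\<exists>lam i. lam \<in> Pkn k n \<and> 1 \<le> i \<and> i \<le> n - 1
            \<and> int (size_part lam) \<ge> int k * (int n - int k) - int i
            \<and> is_core (n - i) lam"
  then obtain lam i where lam: "lam \<in> Pkn k n" and i1: "1 \<le> i" and i2: "i \<le> n - 1"
    and sz: "int (size_part lam) \<ge> int k * (int n - int k) - int i" and co: "is_core (n - i) lam"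
    by blast
  define j where "j = n - i"
  have n6: "6 \<le> n" using assms by linarith
  have j1: "1 \<le> j" "j < n" using i1 i2 n6 unfolding j_def by auto
  define Q where "Q = (\<lambda>r. lam!r + (k - 1 - r)) ` {..<k}"
  have Qn: "Q \<subseteq> {..<n}"
  proof
    fix x assume "x \<in> Q"
    then obtain r where r: "r < k" "x = lam!r + (k - 1 - r)" unfolding Q_def by auto
    then show "x \<in> {..<n}" using Pkn_props(2)[OF lam r(1)] assms by simp
  qed
  have cQ: "card Q = k" unfolding Q_def using card_image[OF p_inj[OF lam]] by simp
  have cl: "\<forall>x\<in>Q. j \<le> x \<longrightarrow> x - j \<in> Q"
  proof (intro ballI impI)
    fix x assume "x \<in> Q" "j \<le> x"
    then obtain r where r: "r < k" "x = lam!r + (k - 1 - r)" unfolding Q_def by auto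
    obtain r' where "r' < k" "lam!r' + (k - 1 - r') = lam!r + (k - 1 - r) - j"
      using p_closure[OF lam _ j1(1) r(1)] co \<open>j \<le> x\<close> r(2) unfolding j_def by blast
    then show "x - j \<in> Q" unfolding Q_def using r(2) by force
  qed
  have d: "card (prs Q n) = k*(n-k) - sum_list lam"
    unfolding Q_def by (rule card_prs_lam[OF lam]) (use assms in simp)
  have "int (k*(n-k)) \<le> int (sum_list lam) + int i"
    using sz assms unfolding size_part_def by (simp add: of_nat_diff)
  then have "k*(n-k) - sum_list lam \<le> i" by linarith
  then have "card (prs Q n) \<le> n - j" using d i2 unfolding j_def by simp
  then show "(k, n) \<in> {(3, 6), (4, 8), (3, 9)}"
    by (rule core[OF Qn cQ assms(1) assms(2) j1 cl])
next
  assume "(k, n) \<in> {(3, 6), (4, 8), (3, 9)}"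
  then consider "k = 3" "n = 6" | "k = 4" "n = 8" | "k = 3" "n = 9" by blast
  then show "\<exists>lam i. lam \<in> Pkn k n \<and> 1 \<le> i \<and> i \<le> n - 1
            \<and> int (size_part lam) \<ge> int k * (int n - int k) - int i
            \<and> is_core (n - i) lam"
  proof cases
    case 1
    then show ?thesis using pk1 ex1 by (intro exI[of _ "[3,2,1]"] exI[of _ 4]) (simp add: size_part_def)
  next
    case 2
    then show ?thesis using pk2 ex2 by (intro exI[of _ "[4,4,2,2]"] exI[of _ 4]) (simp add: size_part_def)
  next
    case 3
    then show ?thesis using pk3 ex3 by (intro exI[of _ "[6,4,2]"] exI[of _ 6]) (simp add: size_part_def)
  qed
qed

end
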